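(* Let $I$ be a finite set of positive integers and $m=\max(I\cup\{0\})$. If $z_0$ is a real root of $d(I;z)$, then $z_0\le 2m-1$.
   Context: $d(I;z)$ is the descent polynomial: the unique polynomial whose value at each integer $n>m$ is the number of permutations $\pi\in\mathfrak S_n$ with $\{j\mid\pi_j>\pi_{j+1}\}=I$, evaluated at $z$. *)

theory Defs
  imports "HOL-Combinatorics.Permutations" "HOL-Computational_Algebra.Polynomial"
begin

definition descent_set :: "nat \<Rightarrow> (nat \<Rightarrow> nat) \<Rightarrow> nat set" where
  "descent_set n \<sigma> = {j \<in> {1..<n}. \<sigma> j > \<sigma> (Suc j)}"

definition descent_count :: "nat set \<Rightarrow> nat \<Rightarrow> nat" where
  "descent_count I n = card {\<sigma>. \<sigma> permutes {1..n} \<and> descent_set n \<sigma> = I}"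

definition descent_poly :: "nat set \<Rightarrow> real poly" where
  "descent_poly I = (THE p. \<forall>n. n > Max (I \<union> {0}) \<longrightarrow>
       poly p (real n) = real (descent_count I n))"

end

theory Submission
  imports Defs
begin

definition dl :: "nat list \<Rightarrow> nat set" where
  "dl xs = {j \<in> {1..<length xs}. xs!(j-1) > xs!j}"

lemma dl_map_mono:
  assumes "\<And>x y. x \<in> set xs \<Longrightarrow> y \<in> set xs \<Longrightarrow> g x < g y \<longleftrightarrow> x < y"
  shows "dl (map g xs) = dl xs"
  unfolding dl_def using assms by (auto simp: nth_map)

lemma dl_append:
  "dl (ys @ zs) = dl ys \<union> {j. j = length ys \<and> ys \<noteq> [] \<and> zs \<noteq> [] \<and> last ys > hd zs}
     \<union> (\<lambda>j. j + length ys) ` dl zs"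
proof (rule set_eqI)
  fix j
  show "j \<in> dl (ys @ zs) \<longleftrightarrow> j \<in> dl ys \<union> {j. j = length ys \<and> ys \<noteq> [] \<and> zs \<noteq> [] \<and> last ys > hd zs}
     \<union> (\<lambda>j. j + length ys) ` dl zs"
  proof (cases "j < length ys")
    case True
    then show ?thesis unfolding dl_def by (auto simp: nth_append)
  next
    case False
    show ?thesis
    proof (cases "j = length ys")
      case True
      then show ?thesis unfolding dl_def
        by (cases ys rule: rev_cases; cases zs) (auto simp: nth_append)
    next
      case False
      with \<open>\<not> j < length ys\<close> have "j > length ys" by simp
      then show ?thesis unfolding dl_def
        apply (auto simp: nth_append image_iff)
        apply (rule_tac x="j - length ys" in exI)
        apply (auto simp: nth_append)
        done
    qed
  qed
qed

lemma dl_empty_sorted: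
  assumes "dl zs = {}" "distinct zs"
  shows "sorted zs"
proof -
  have "\<forall>i. Suc i < length zs \<longrightarrow> zs!i \<le> zs!Suc i"
  proof (intro allI impI)
    fix i assume "Suc i < length zs"
    then have "Suc i \<notin> dl zs" using assms(1) by simp
    then show "zs!i \<le> zs!Suc i" using \<open>Suc i < length zs\<close> unfolding dl_def by auto
  qed
  then show ?thesis by (simp add: sorted_iff_nth_Suc)
qed

lemma dl_sorted: "sorted zs \<Longrightarrow> dl zs = {}"
  unfolding dl_def by (auto simp: sorted_iff_nth_mono not_less)
   (metis diff_le_self not_le)

lemma descent_set_list:
  "dl (map \<sigma> [1..<Suc n]) = descent_set n \<sigma>"
  unfolding dl_def descent_set_def by (auto simp del: upt_Suc simp: nth_map)

lemma descent_count_list: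
  "descent_count I n = card {xs. distinct xs \<and> set xs = {1..n} \<and> dl xs = I}"
proof -
  let ?P = "{\<sigma>. \<sigma> permutes {1..n} \<and> descent_set n \<sigma> = I}"
  let ?L = "{xs. distinct xs \<and> set xs = {1..n} \<and> dl xs = I}"
  let ?f = "\<lambda>\<sigma>. map \<sigma> [1..<Suc n]"
  have inj: "inj_on ?f ?P"
  proof (rule inj_onI)
    fix a b assume a: "a \<in> ?P" and b: "b \<in> ?P" and eq: "?f a = ?f b"
    show "a = b"
    proof
      fix x show "a x = b x"
      proof (cases "x \<in> {1..n}")
        case True
        then show ?thesis using eq by (auto simp: map_eq_conv)
      next
        case False
        then show ?thesis using a b by (auto simp: permutes_def)
      qed
    qed
  qed
  have img: "?f ` ?P = ?L"
  proof
    show "?f ` ?P \<subseteq> ?L"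
    proof (rule image_subsetI)
      fix \<sigma> assume "\<sigma> \<in> ?P"
      then have s: "\<sigma> permutes {1..n}" "descent_set n \<sigma> = I" by auto
      have "inj_on \<sigma> {1..n}" using s(1) permutes_inj_on by blast
      then have "distinct (map \<sigma> [1..<Suc n])" by (simp del: upt_Suc add: distinct_map atLeastLessThanSuc_atLeastAtMost)
      moreover have "set (map \<sigma> [1..<Suc n]) = {1..n}"
        using permutes_image[OF s(1)] by (simp del: upt_Suc add: atLeastLessThanSuc_atLeastAtMost)
      ultimately show "map \<sigma> [1..<Suc n] \<in> ?L" using s(2) descent_set_list[of \<sigma> n] by simp
    qed
    show "?L \<subseteq> ?f ` ?P"
    proof
      fix xs assume xs: "xs \<in> ?L"
      then have len: "length xs = n" using distinct_card[of xs] by auto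
      define \<sigma> where "\<sigma> x = (if x \<in> {1..n} then xs!(x-1) else x)" for x
      have mp: "map \<sigma> [1..<Suc n] = xs"
        by (rule nth_equalityI) (auto simp del: upt_Suc simp: len \<sigma>_def nth_map)
      have "bij_betw \<sigma> {1..n} {1..n}"
      proof (rule bij_betw_imageI)
        show "inj_on \<sigma> {1..n}"
          using xs len by (auto simp: inj_on_def \<sigma>_def nth_eq_iff_index_eq)
        show "\<sigma> ` {1..n} = {1..n}"
        proof -
          have "\<sigma> ` {1..n} = set (map \<sigma> [1..<Suc n])" by (simp del: upt_Suc add: atLeastLessThanSuc_atLeastAtMost)
          moreover have "set xs = {1..n}" using xs by simp
          ultimately show ?thesis using mp by (metis set_map)
        qed
      qed
      then have "\<sigma> permutes {1..n}" by (rule bij_imp_permutes) (auto simp: \<sigma>_def)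
      moreover have "descent_set n \<sigma> = I" using xs mp descent_set_list[of \<sigma> n] by simp
      ultimately show "xs \<in> ?f ` ?P" using mp by force
    qed
  qed
  show ?thesis unfolding descent_count_def using card_image[OF inj] img by simp
qed

lemma dl_subset: "dl xs \<subseteq> {1..<length xs}" unfolding dl_def by auto

lemma split_count:
  fixes I :: "nat set" and m n :: nat
  assumes m1: "m \<ge> 1" and mI: "m \<in> I" and Isub: "I \<subseteq> {1..m}" and mn: "m < n"
  shows "card {xs. distinct xs \<and> set xs = {1..n} \<and> dl xs = I} =
         card {ys. length ys = m \<and> distinct ys \<and> set ys \<subseteq> {1..n} \<and> dl ys = I - {m}
                   \<and> last ys > Min ({1..n} - set ys)}"
    (is "card ?T = card ?Y")
proof -
  let ?G = "\<lambda>ys. ys @ sorted_list_of_set ({1..n} - set ys)"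
  have inj: "inj_on ?G ?Y"
  proof (rule inj_onI)
    fix a b assume "a \<in> ?Y" "b \<in> ?Y" "?G a = ?G b"
    moreover have "length a = length b" using \<open>a \<in> ?Y\<close> \<open>b \<in> ?Y\<close> by simp
    ultimately show "a = b" by simp
  qed
  have "?G ` ?Y = ?T"
  proof
    show "?G ` ?Y \<subseteq> ?T"
    proof (rule image_subsetI)
      fix ys assume "ys \<in> ?Y"
      then have ys: "length ys = m" "distinct ys" "set ys \<subseteq> {1..n}" "dl ys = I - {m}"
        "last ys > Min ({1..n} - set ys)" by auto
      define C where "C = {1..n} - set ys"
      have "card (set ys) = m" using ys(1) distinct_card[OF ys(2)] by simp
      have "C \<noteq> {}"
      proof
        assume "C = {}"
        then have "{1..n} \<subseteq> set ys" unfolding C_def by auto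
        then have "card {1..n} \<le> card (set ys)" by (intro card_mono) auto
        then show False using \<open>card (set ys) = m\<close> mn by simp
      qed
      have fC: "finite C" unfolding C_def by simp
      let ?zs = "sorted_list_of_set C"
      have zs: "?zs \<noteq> []" "hd ?zs = Min C" "sorted ?zs" "distinct ?zs" "set ?zs = C"
        using sorted_list_of_set_nonempty[OF fC \<open>C \<noteq> {}\<close>] fC \<open>C \<noteq> {}\<close> by (auto intro: Min_in)
      have "ys \<noteq> []" using ys(1) m1 by auto
      have "last ys > hd ?zs" using zs(2) ys(5) C_def by simp
      then have "{j. j = length ys \<and> ys \<noteq> [] \<and> ?zs \<noteq> [] \<and> last ys > hd ?zs} = {m}"
        using ys(1) \<open>ys \<noteq> []\<close> zs(1) by auto
      then have "dl (ys @ ?zs) = (I - {m}) \<union> {m}"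
        using dl_append[of ys ?zs] dl_sorted[OF zs(3)] ys(4) by simp
      then have "dl (ys @ ?zs) = I" using mI by auto
      moreover have "distinct (ys @ ?zs)" using ys zs C_def by auto
      moreover have "set (ys @ ?zs) = {1..n}" using ys zs C_def by auto
      ultimately show "?G ys \<in> ?T" using C_def by simp
    qed
    show "?T \<subseteq> ?G ` ?Y"
    proof
      fix xs assume "xs \<in> ?T"
      then have xs: "distinct xs" "set xs = {1..n}" "dl xs = I" by auto
      have len: "length xs = n" using distinct_card[OF xs(1)] xs(2) by simp
      define ys where "ys = take m xs"
      define zs where "zs = drop m xs"
      have xsd: "xs = ys @ zs" unfolding ys_def zs_def by simp
      have lys: "length ys = m" using len mn ys_def by simp
      have "zs \<noteq> []" using len mn zs_def by simp
      have "ys \<noteq> []" using lys m1 by auto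
      have "{j. j = length ys \<and> ys \<noteq> [] \<and> zs \<noteq> [] \<and> last ys > hd zs} = {j. j = m \<and> last ys > hd zs}"
        using lys \<open>zs \<noteq> []\<close> \<open>ys \<noteq> []\<close> by blast
      then have D: "I = dl ys \<union> {j. j = m \<and> last ys > hd zs} \<union> (\<lambda>j. j + m) ` dl zs"
        using dl_append[of ys zs] xs(3) xsd lys by simp
      have "dl zs = {}"
      proof (rule ccontr)
        assume "dl zs \<noteq> {}"
        then obtain j where "j \<in> dl zs" by auto
        then have "j \<ge> 1" using dl_subset[of zs] by auto
        then have "j + m \<in> I" "j + m > m" using D \<open>j \<in> dl zs\<close> by auto
        then show False using Isub by auto
      qed
      have dz: "distinct zs" "distinct ys" "set ys \<inter> set zs = {}" using xs(1) xsd by auto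
      have "sorted zs" by (rule dl_empty_sorted) (use \<open>dl zs = {}\<close> dz in auto)
      have szs: "set zs = {1..n} - set ys" using xs(2) xsd dz by auto
      have zsl: "zs = sorted_list_of_set ({1..n} - set ys)"
        using sorted_distinct_set_unique[of zs "sorted_list_of_set ({1..n} - set ys)"]
          \<open>sorted zs\<close> dz szs by simp
      have "hd zs = Min ({1..n} - set ys)"
      proof -
        have ne: "{1..n} - set ys \<noteq> {}" using szs \<open>zs \<noteq> []\<close> by (metis set_empty)
        show ?thesis using zsl sorted_list_of_set_nonempty[OF _ ne] by simp
      qed
      have dys: "dl ys \<subseteq> {1..<m}" using dl_subset[of ys] lys by simp
      have "dl ys = I - {m}"
      proof
        show "dl ys \<subseteq> I - {m}" using D dys by auto
        show "I - {m} \<subseteq> dl ys"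
        proof
          fix j assume j: "j \<in> I - {m}"
          then have "j \<le> m" using Isub by auto
          then show "j \<in> dl ys" using D j by auto
        qed
      qed
      moreover have "last ys > hd zs" using D mI dys \<open>dl zs = {}\<close> by auto
      moreover have "set ys \<subseteq> {1..n}" using xs(2) xsd by auto
      ultimately have "ys \<in> ?Y" using lys dz \<open>hd zs = _\<close> by auto
      then show "xs \<in> ?G ` ?Y" using xsd zsl by blast
    qed
  qed
  then show ?thesis using card_image[OF inj] by simp
qed

lemma strict_nth_less_iff:
  fixes xs :: "nat list"
  assumes "sorted_wrt (<) xs" "i < length xs" "j < length xs"
  shows "xs!i < xs!j \<longleftrightarrow> i < j"
proof
  assume "xs!i < xs!j"
  show "i < j"
  proof (rule ccontr)
    assume "\<not> i < j"
    then have "j < i \<or> j = i" by auto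
    then show False
    proof
      assume "j < i"
      then have "xs!j < xs!i" using sorted_wrt_nth_less[OF assms(1)] assms by blast
      then show False using \<open>xs!i < xs!j\<close> by (meson less_asym)
    qed (use \<open>xs!i < xs!j\<close> in simp)
  qed
next
  assume "i < j"
  then show "xs!i < xs!j" using sorted_wrt_nth_less[OF assms(1)] assms by blast
qed

lemma sl_lower:
  assumes "sorted_wrt (<) xs" "\<forall>x\<in>set xs. x \<ge> (1::nat)" "i < length xs"
  shows "xs!i \<ge> i + 1"
  using assms(3)
proof (induction i)
  case 0 then show ?case using assms(2) nth_mem[of 0 xs] by auto
next
  case (Suc i)
  then have "xs!i < xs!Suc i" using sorted_wrt_nth_less[OF assms(1), of i "Suc i"] by simp
  then show ?case using Suc by simp
qed

lemma sl_prefix: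
  assumes fA: "finite A" and sub: "{1..s} \<subseteq> A" and pos: "\<forall>x\<in>A. x \<ge> (1::nat)"
  shows "sorted_list_of_set A = [1..<Suc s] @ sorted_list_of_set (A - {1..s})"
proof -
  have "sorted_wrt (<) ([1..<Suc s] @ sorted_list_of_set (A - {1..s}))"
    using fA pos by (auto simp: sorted_wrt_append)
  moreover have "set ([1..<Suc s] @ sorted_list_of_set (A - {1..s})) = A" using fA sub by auto
  ultimately show ?thesis
    using strict_sorted_equal[of "[1..<Suc s] @ sorted_list_of_set (A - {1..s})" "sorted_list_of_set A"]
    fA by simp
qed

lemma min_cond:
  assumes A: "A \<subseteq> {1..n}" "card A = m" "m < n" and s: "1 \<le> s" "s \<le> m"
  shows "Min ({1..n} - A) < sorted_list_of_set A ! (s - 1) \<longleftrightarrow> \<not> {1..s} \<subseteq> A"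
proof -
  have fA: "finite A" using A(1) finite_subset by blast
  let ?sl = "sorted_list_of_set A"
  have len: "length ?sl = m" using A fA by simp
  have "s - 1 < length ?sl" using len s by simp
  then have inA: "?sl ! (s - 1) \<in> A" using fA by (metis nth_mem set_sorted_list_of_set)
  have lower: "?sl ! (s - 1) \<ge> s"
  proof -
    have "\<forall>x\<in>set ?sl. x \<ge> 1" using A(1) fA by auto
    then show ?thesis using sl_lower[of ?sl "s - 1"] \<open>s - 1 < length ?sl\<close> fA s by simp
  qed
  have fC: "finite ({1..n} - A)" by simp
  have "{1..n} - A \<noteq> {}"
  proof
    assume "{1..n} - A = {}"
    then have "card {1..n} \<le> card A" using fA by (intro card_mono) auto
    then show False using A by simp
  qed
  show ?thesis
  proof
    assume lt: "Min ({1..n} - A) < ?sl ! (s - 1)"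
    show "\<not> {1..s} \<subseteq> A"
    proof
      assume sub: "{1..s} \<subseteq> A"
      have "?sl = [1..<Suc s] @ sorted_list_of_set (A - {1..s})"
        using sl_prefix[OF fA sub] A(1) by (meson atLeastAtMost_iff subset_iff)
      then have "?sl ! (s - 1) = s" using s by (simp add: nth_append)
      moreover have "Min ({1..n} - A) \<in> {1..n} - A" using Min_in[OF fC \<open>{1..n} - A \<noteq> {}\<close>] .
      ultimately have "Min ({1..n} - A) \<in> {1..s}" using lt by auto
      then show False using sub \<open>Min ({1..n} - A) \<in> {1..n} - A\<close> by blast
    qed
  next
    assume "\<not> {1..s} \<subseteq> A"
    then obtain k where k: "k \<in> {1..s}" "k \<notin> A" by (meson subsetI)
    then have "k \<in> {1..n} - A" using s A by auto
    then have "Min ({1..n} - A) \<le> k" using fC by simp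
    moreover have "Min ({1..n} - A) \<noteq> ?sl ! (s - 1)"
      using Min_in[OF fC \<open>{1..n} - A \<noteq> {}\<close>] inA by auto
    ultimately show "Min ({1..n} - A) < ?sl ! (s - 1)" using k lower by auto
  qed
qed

lemma g_props:
  fixes A :: "nat set"
  assumes A: "A \<subseteq> {1..n}" "card A = m"
  defines "g \<equiv> \<lambda>i. sorted_list_of_set A ! (i - 1)"
  shows "\<And>i j. i \<in> {1..m} \<Longrightarrow> j \<in> {1..m} \<Longrightarrow> g i < g j \<longleftrightarrow> i < j"
    and "inj_on g {1..m}"
    and "g ` {1..m} = A"
proof -
  have fA: "finite A" using A(1) finite_subset by blast
  let ?sl = "sorted_list_of_set A"
  have len: "length ?sl = m" using A fA by simp
  have ss: "sorted_wrt (<) ?sl" by simp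
  show mono: "\<And>i j. i \<in> {1..m} \<Longrightarrow> j \<in> {1..m} \<Longrightarrow> g i < g j \<longleftrightarrow> i < j"
  proof -
    fix i j assume "i \<in> {1..m}" "j \<in> {1..m}"
    then have "i - 1 < length ?sl" "j - 1 < length ?sl" "i - 1 < j - 1 \<longleftrightarrow> i < j" using len by auto
    then show "g i < g j \<longleftrightarrow> i < j" unfolding g_def using strict_nth_less_iff[OF ss] by simp
  qed
  show "inj_on g {1..m}"
  proof (rule inj_onI)
    fix i j assume "i \<in> {1..m}" "j \<in> {1..m}" "g i = g j"
    then show "i = j" using mono[of i j] mono[of j i] by (cases "i < j"; cases "j < i") auto
  qed
  have "g ` {1..m} = (\<lambda>k. ?sl ! k) ` {0..<m}"
  proof -
    have e: "{1..m} = Suc ` {0..<m}" by (simp add: image_Suc_atLeastLessThan atLeastLessThanSuc_atLeastAtMost)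
    have "g ` (Suc ` {0..<m}) = (\<lambda>k. ?sl ! k) ` {0..<m}" unfolding g_def image_image by simp
    then show ?thesis by (simp only: e)
  qed
  also have "\<dots> = set ?sl" using len nth_image[of m ?sl] by simp
  also have "\<dots> = A" using fA by simp
  finally show "g ` {1..m} = A" .
qed

lemma std_count:
  fixes J :: "nat set" and m n :: nat
  assumes m1: "m \<ge> 1" and mn: "m < n"
  shows "card {ys. length ys = m \<and> distinct ys \<and> set ys \<subseteq> {1..n} \<and> dl ys = J
                   \<and> last ys > Min ({1..n} - set ys)}
       = (\<Sum>\<sigma>\<in>{\<sigma>. distinct \<sigma> \<and> set \<sigma> = {1..m} \<and> dl \<sigma> = J}.
            card {A. A \<subseteq> {1..n} \<and> card A = m \<and> \<not> {1..last \<sigma>} \<subseteq> A})"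
    (is "card ?Y = sum (\<lambda>\<sigma>. card (?S \<sigma>)) ?P")
proof -
  let ?F = "\<lambda>(\<sigma>, A). map (\<lambda>i. sorted_list_of_set A ! (i - 1)) \<sigma>"
  have finP: "finite ?P"
  proof (rule finite_subset)
    show "?P \<subseteq> {xs. set xs \<subseteq> {1..m} \<and> length xs = m}"
    proof
      fix xs assume "xs \<in> ?P"
      then show "xs \<in> {xs. set xs \<subseteq> {1..m} \<and> length xs = m}"
        using distinct_card[of xs] by simp
    qed
    show "finite {xs. set xs \<subseteq> {1..m} \<and> length xs = m}"
      by (rule finite_lists_length_eq) simp
  qed
  have finS: "\<forall>\<sigma>\<in>?P. finite (?S \<sigma>)"
  proof
    fix \<sigma> have "?S \<sigma> \<subseteq> Pow {1..n}" by blast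
    then show "finite (?S \<sigma>)" by (rule finite_subset) simp
  qed
  have cardSig: "card (Sigma ?P ?S) = sum (\<lambda>\<sigma>. card (?S \<sigma>)) ?P"
    by (rule card_SigmaI[OF finP finS])
  have key: "?F (\<sigma>, A) \<in> ?Y \<longleftrightarrow> dl \<sigma> = J \<and> \<not> {1..last \<sigma>} \<subseteq> A"
      "set (?F (\<sigma>, A)) = A"
    if s: "distinct \<sigma>" "set \<sigma> = {1..m}" and A: "A \<subseteq> {1..n}" "card A = m"
    for \<sigma> :: "nat list" and A :: "nat set"
  proof -
    define g where "g = (\<lambda>i. sorted_list_of_set A ! (i - 1))"
    have gm: "\<And>i j. i \<in> {1..m} \<Longrightarrow> j \<in> {1..m} \<Longrightarrow> g i < g j \<longleftrightarrow> i < j"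
      and gi: "inj_on g {1..m}" and gA: "g ` {1..m} = A"
      using g_props[OF A] unfolding g_def by auto
    have F: "?F (\<sigma>, A) = map g \<sigma>" unfolding g_def by simp
    have lens: "length \<sigma> = m" using s distinct_card[OF s(1)] by simp
    then have "\<sigma> \<noteq> []" using m1 by auto
    then have ls: "last \<sigma> \<in> {1..m}" using s last_in_set by blast
    show setF: "set (?F (\<sigma>, A)) = A" using F s gA by simp
    have d1: "dl (map g \<sigma>) = dl \<sigma>" by (rule dl_map_mono) (use gm s in auto)
    have d2: "last (map g \<sigma>) = sorted_list_of_set A ! (last \<sigma> - 1)"
      using \<open>\<sigma> \<noteq> []\<close> by (simp add: last_map g_def)
    have d3: "distinct (map g \<sigma>)" using s gi by (simp add: distinct_map)
    have d4: "length (map g \<sigma>) = m" using lens by simp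
    have d5: "set (map g \<sigma>) = A" using setF F by simp
    have mc: "Min ({1..n} - A) < sorted_list_of_set A ! (last \<sigma> - 1) \<longleftrightarrow> \<not> {1..last \<sigma>} \<subseteq> A"
      using min_cond[OF A mn, of "last \<sigma>"] ls by simp
    have "?F (\<sigma>, A) \<in> ?Y \<longleftrightarrow> map g \<sigma> \<in> ?Y" unfolding F ..
    also have "\<dots> \<longleftrightarrow> dl \<sigma> = J \<and> Min ({1..n} - A) < sorted_list_of_set A ! (last \<sigma> - 1)"
      unfolding mem_Collect_eq d1 d2 d5 using d3 d4 A(1) by simp
    also have "\<dots> \<longleftrightarrow> dl \<sigma> = J \<and> \<not> {1..last \<sigma>} \<subseteq> A" using mc by simp
    finally show "?F (\<sigma>, A) \<in> ?Y \<longleftrightarrow> dl \<sigma> = J \<and> \<not> {1..last \<sigma>} \<subseteq> A" .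
  qed
  have inj: "inj_on ?F (Sigma ?P ?S)"
  proof (rule inj_onI)
    fix p q assume p: "p \<in> Sigma ?P ?S" and q: "q \<in> Sigma ?P ?S" and eq: "?F p = ?F q"
    obtain \<sigma> A where pd: "p = (\<sigma>, A)" by (cases p)
    obtain \<tau> B where qd: "q = (\<tau>, B)" by (cases q)
    have ps: "distinct \<sigma>" "set \<sigma> = {1..m}" "A \<subseteq> {1..n}" "card A = m" using p pd by auto
    have qs: "distinct \<tau>" "set \<tau> = {1..m}" "B \<subseteq> {1..n}" "card B = m" using q qd by auto
    have a1: "set (?F p) = A" using key(2)[OF ps] pd by simp
    have a2: "set (?F q) = B" using key(2)[OF qs] qd by simp
    have "set (?F p) = set (?F q)" using eq by (rule arg_cong)
    then have "A = B" unfolding a1 a2 .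
    define g where "g = (\<lambda>i. sorted_list_of_set A ! (i - 1))"
    have gi: "inj_on g {1..m}" using g_props[OF ps(3,4)] unfolding g_def by auto
    have "map g \<sigma> = map g \<tau>" using eq pd qd \<open>A = B\<close> unfolding g_def by simp
    then have "\<sigma> = \<tau>" using inj_on_map_eq_map[of g \<sigma> \<tau>] gi ps qs by simp
    then show "p = q" using pd qd \<open>A = B\<close> by simp
  qed
  have img: "?F ` (Sigma ?P ?S) = ?Y"
  proof
    show "?F ` (Sigma ?P ?S) \<subseteq> ?Y"
    proof
      fix ys assume "ys \<in> ?F ` (Sigma ?P ?S)"
      then obtain \<sigma> A where p: "(\<sigma>, A) \<in> Sigma ?P ?S" and ys: "ys = ?F (\<sigma>, A)" by blast
      have ps: "distinct \<sigma>" "set \<sigma> = {1..m}" "A \<subseteq> {1..n}" "card A = m" using p by auto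
      show "ys \<in> ?Y" using key(1)[OF ps] p ys by auto
    qed
    show "?Y \<subseteq> ?F ` (Sigma ?P ?S)"
    proof
      fix ys assume ysY: "ys \<in> ?Y"
      define A where "A = set ys"
      have ysp: "length ys = m" "distinct ys" "set ys \<subseteq> {1..n}" using ysY by auto
      have cA: "card A = m" using distinct_card[OF ysp(2)] ysp(1) A_def by simp
      have fA: "finite A" using A_def by simp
      let ?sl = "sorted_list_of_set A"
      have slA: "set ?sl = A" using fA by simp
      have lensl: "length ?sl = m" using cA fA by simp
      have ninj: "inj_on (\<lambda>k. ?sl ! k) {0..<m}"
        using inj_on_nth[of ?sl "{0..<m}"] lensl by simp
      have nimg: "(\<lambda>k. ?sl ! k) ` {0..<m} = A" using nth_image[of m ?sl] lensl slA by simp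
      define t where "t = the_inv_into {0..<m} (\<lambda>k. ?sl ! k)"
      define h :: "nat \<Rightarrow> nat" where "h = (\<lambda>y. t y + 1)"
      define \<sigma> where "\<sigma> = map h ys"
      have tin: "t y \<in> {0..<m}" if "y \<in> A" for y
        unfolding t_def using the_inv_into_into[OF ninj, of y "{0..<m}"] that nimg by auto
      have tf: "?sl ! (t y) = y" if "y \<in> A" for y
        unfolding t_def using f_the_inv_into_f[OF ninj, of y] that nimg by auto
      have bk: "?F (\<sigma>, A) = ys"
        unfolding \<sigma>_def h_def using tf A_def by (simp add: map_idI)
      have hinj: "inj_on h A"
      proof (rule inj_onI)
        fix x y assume "x \<in> A" "y \<in> A" "h x = h y"
        then have "t x = t y" unfolding h_def by simp
        then have "?sl ! t x = ?sl ! t y" by simp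
        then show "x = y" using tf[OF \<open>x \<in> A\<close>] tf[OF \<open>y \<in> A\<close>] by simp
      qed
      have ds: "distinct \<sigma>" using ysp(2) hinj A_def by (simp add: \<sigma>_def distinct_map)
      have ssub: "set \<sigma> \<subseteq> {1..m}"
      proof
        fix x assume "x \<in> set \<sigma>"
        then obtain y where "y \<in> A" "x = h y" unfolding \<sigma>_def A_def by auto
        then show "x \<in> {1..m}" unfolding h_def using tin[of y] by simp
      qed
      have "card (set \<sigma>) = m" using distinct_card[OF ds] ysp(1) \<sigma>_def by simp
      then have ss: "set \<sigma> = {1..m}" using card_subset_eq[OF _ ssub] by simp
      have Asub: "A \<subseteq> {1..n}" using ysp(3) A_def by simp
      have "?F (\<sigma>, A) \<in> ?Y" using ysY bk by (simp only:)
      then have "dl \<sigma> = J \<and> \<not> {1..last \<sigma>} \<subseteq> A"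
        by (rule iffD1[OF key(1)[OF ds ss Asub cA]])
      then have "\<sigma> \<in> ?P" "A \<in> ?S \<sigma>" using ds ss cA Asub by simp_all
      then have "(\<sigma>, A) \<in> Sigma ?P ?S" by (rule SigmaI)
      from imageI[OF this, of ?F] show "ys \<in> ?F ` (Sigma ?P ?S)" unfolding bk .
    qed
  qed
  show ?thesis using card_image[OF inj] img cardSig by simp
qed

lemma card_S:
  fixes s m n :: nat
  assumes "1 \<le> s" "s \<le> m" "m \<le> n"
  shows "real (card {A. A \<subseteq> {1..n} \<and> card A = m \<and> \<not> {1..s} \<subseteq> A})
         = real (n choose m) - real ((n - s) choose (m - s))"
proof -
  let ?All = "{A. A \<subseteq> {1..n} \<and> card A = m}"
  let ?Cont = "{A. A \<subseteq> {1..n} \<and> card A = m \<and> {1..s} \<subseteq> A}"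
  let ?Bs = "{B. B \<subseteq> {Suc s..n} \<and> card B = m - s}"
  have eq: "{A. A \<subseteq> {1..n} \<and> card A = m \<and> \<not> {1..s} \<subseteq> A} = ?All - ?Cont" by blast
  have sub: "?Cont \<subseteq> ?All" by blast
  have finAll: "finite ?All"
  proof -
    have "?All \<subseteq> Pow {1..n}" by blast
    then show ?thesis by (rule finite_subset) simp
  qed
  have finCont: "finite ?Cont" using finite_subset[OF sub finAll] .
  have cAll: "card ?All = n choose m" using n_subsets[of "{1..n}" m] by simp
  have inj: "inj_on (\<lambda>B. B \<union> {1..s}) ?Bs"
  proof (rule inj_onI)
    fix B C assume B: "B \<in> ?Bs" and C: "C \<in> ?Bs" and e: "B \<union> {1..s} = C \<union> {1..s}"
    have "B = (B \<union> {1..s}) - {1..s}" using B by auto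
    also have "\<dots> = (C \<union> {1..s}) - {1..s}" using e by simp
    also have "\<dots> = C" using C by auto
    finally show "B = C" .
  qed
  have img: "(\<lambda>B. B \<union> {1..s}) ` ?Bs = ?Cont"
  proof
    show "(\<lambda>B. B \<union> {1..s}) ` ?Bs \<subseteq> ?Cont"
    proof (rule image_subsetI)
      fix B assume B: "B \<in> ?Bs"
      then have fB: "finite B" using finite_subset[of B "{Suc s..n}"] by auto
      have "B \<inter> {1..s} = {}" using B by auto
      then have "card (B \<union> {1..s}) = card B + card {1..s}" using fB by (simp add: card_Un_disjoint)
      then have "card (B \<union> {1..s}) = m" using B assms by simp
      moreover have "B \<union> {1..s} \<subseteq> {1..n}" using B assms by auto
      ultimately show "B \<union> {1..s} \<in> ?Cont" by blast
    qed
    show "?Cont \<subseteq> (\<lambda>B. B \<union> {1..s}) ` ?Bs"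
    proof
      fix A assume A: "A \<in> ?Cont"
      then have fA: "finite A" using finite_subset[of A "{1..n}"] by auto
      have "card (A - {1..s}) = card A - card {1..s}" using A fA by (simp add: card_Diff_subset)
      then have "card (A - {1..s}) = m - s" using A by simp
      moreover have "A - {1..s} \<subseteq> {Suc s..n}" using A by auto
      ultimately have "A - {1..s} \<in> ?Bs" by blast
      moreover have "A = (A - {1..s}) \<union> {1..s}" using A by auto
      ultimately show "A \<in> (\<lambda>B. B \<union> {1..s}) ` ?Bs" by (rule rev_image_eqI)
    qed
  qed
  have cBs: "card ?Bs = (n - s) choose (m - s)" using n_subsets[of "{Suc s..n}" "m - s"] by simp
  have cCont: "card ?Cont = (n - s) choose (m - s)" using card_image[OF inj] img cBs by simp
  have "card (?All - ?Cont) = card ?All - card ?Cont" using card_Diff_subset[OF finCont sub] .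
  moreover have "card ?Cont \<le> card ?All" using card_mono[OF finAll sub] .
  ultimately show ?thesis unfolding eq using cAll cCont by (simp add: of_nat_diff)
qed

lemma exists_desc:
  "\<exists>xs. distinct xs \<and> set xs = {1..n} \<and> dl xs = J \<inter> {1..<n}"
proof (induction n)
  case 0
  show ?case by (rule exI[of _ "[]"]) (simp add: dl_def)
next
  case (Suc k)
  then obtain xs where xs: "distinct xs" "set xs = {1..k}" "dl xs = J \<inter> {1..<k}" by blast
  have len: "length xs = k" using distinct_card[OF xs(1)] xs(2) by simp
  show ?case
  proof (cases "k \<in> J \<and> k \<ge> 1")
    case True
    let ?ys = "map Suc xs @ [1]"
    have ne: "xs \<noteq> []" using len True by auto
    have d1: "dl (map Suc xs) = dl xs" by (rule dl_map_mono) simp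
    have "last xs \<in> {1..k}" using last_in_set[OF ne] xs(2) by simp
    then have "last (map Suc xs) > hd [1::nat]" using ne by (simp add: last_map)
    then have "{j. j = length (map Suc xs) \<and> map Suc xs \<noteq> [] \<and> [1::nat] \<noteq> [] \<and> last (map Suc xs) > hd [1::nat]} = {k}"
      using len ne by auto
    moreover have "dl [1::nat] = {}" by (simp add: dl_def)
    ultimately have "dl ?ys = J \<inter> {1..<k} \<union> {k}" using dl_append[of "map Suc xs" "[1]"] d1 xs(3) by simp
    also have "\<dots> = J \<inter> {1..<Suc k}" using True by auto
    finally have "dl ?ys = J \<inter> {1..<Suc k}" .
    moreover have "distinct ?ys" using xs by (auto simp: distinct_map)
    moreover have "set ?ys = {1..Suc k}"
    proof -
      have "set ?ys = Suc ` {1..k} \<union> {1}" using xs(2) by simp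
      also have "\<dots> = {1..Suc k}" by (auto simp: image_iff)
      finally show ?thesis .
    qed
    ultimately show ?thesis by blast
  next
    case False
    let ?ys = "xs @ [Suc k]"
    have "\<not> (last xs > hd [Suc k])" if "xs \<noteq> []"
      using that xs(2) last_in_set[OF that] by auto
    then have e: "{j. j = length xs \<and> xs \<noteq> [] \<and> Suc k < last xs} = {}" by auto
    moreover have "dl [Suc k] = {}" by (simp add: dl_def)
    ultimately have "dl ?ys = J \<inter> {1..<k}" using dl_append[of xs "[Suc k]"] xs(3) by (simp add: e)
    also have "\<dots> = J \<inter> {1..<Suc k}" using False by (auto simp: less_Suc_eq)
    finally have "dl ?ys = J \<inter> {1..<Suc k}" .
    moreover have "distinct ?ys" using xs by auto
    moreover have "set ?ys = {1..Suc k}" using xs(2) by auto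
    ultimately show ?thesis by blast
  qed
qed

lemma gchoose_pos:
  fixes a :: real
  shows "a > real k - 1 \<Longrightarrow> a gchoose k > 0"
proof (induction k arbitrary: a)
  case 0 then show ?case by simp
next
  case (Suc k)
  have "(a - 1) gchoose k > 0" using Suc.IH[of "a - 1"] Suc.prems by simp
  moreover have "a / real (Suc k) > 0" using Suc.prems by simp
  moreover have e: "a gchoose Suc k = (a / real (Suc k)) * ((a - 1) gchoose k)"
    using gbinomial_absorption'[of "Suc k" a] by (simp only: diff_Suc_1 zero_less_Suc)
  ultimately show ?case by (simp only: e mult_pos_pos)
qed

lemma gchoose_step:
  fixes z :: real
  assumes "m \<ge> 1" "z > real m"
  shows "(z - 1) gchoose (m - 1) < z gchoose m"
proof -
  have rm: "real (m - 1) = real m - 1" using assms(1) by (simp add: of_nat_diff)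
  have "z - 1 > real (m - 1) - 1" using rm assms(2) by linarith
  then have pos: "(z - 1) gchoose (m - 1) > 0" by (rule gchoose_pos)
  have mpos: "real m > 0" using assms(1) by simp
  have "z / real m > 1" using assms(2) mpos by (simp add: less_divide_eq)
  from mult_strict_right_mono[OF this pos]
  have lt: "(z - 1) gchoose (m - 1) < (z / real m) * ((z - 1) gchoose (m - 1))" by simp
  have e: "z gchoose m = (z / real m) * ((z - 1) gchoose (m - 1))"
    using gbinomial_absorption'[of m z] assms(1) by simp
  show ?thesis unfolding e by (rule lt)
qed

lemma gchoose_le:
  fixes z :: real
  shows "s \<le> m \<Longrightarrow> z > real m \<Longrightarrow> (z - real s) gchoose (m - s) \<le> z gchoose m"
proof (induction s arbitrary: z m)
  case 0 then show ?case by simp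
next
  case (Suc s)
  have m1: "m \<ge> 1" using Suc.prems by simp
  have rm: "real (m - 1) = real m - 1" using m1 by (simp add: of_nat_diff)
  have a1: "s \<le> m - 1" using Suc.prems by simp
  have a2: "z - 1 > real (m - 1)" using rm Suc.prems by linarith
  have "(z - 1 - real s) gchoose (m - 1 - s) \<le> (z - 1) gchoose (m - 1)"
    by (rule Suc.IH[OF a1 a2])
  moreover have "(z - 1) gchoose (m - 1) < z gchoose m" by (rule gchoose_step[OF m1 Suc.prems(2)])
  moreover have "z - real (Suc s) = z - 1 - real s" "m - Suc s = m - 1 - s" by simp_all
  ultimately show ?case by (simp only:)
qed

lemma gchoose_lt:
  fixes z :: real
  assumes "1 \<le> s" "s \<le> m" "z > real m"
  shows "(z - real s) gchoose (m - s) < z gchoose m"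
proof -
  obtain s' where s: "s = Suc s'" using assms by (cases s) auto
  have m1: "m \<ge> 1" using assms by simp
  have rm: "real (m - 1) = real m - 1" using m1 by (simp add: of_nat_diff)
  have a1: "s' \<le> m - 1" using assms s by simp
  have a2: "z - 1 > real (m - 1)" using rm assms by linarith
  have "(z - 1 - real s') gchoose (m - 1 - s') \<le> (z - 1) gchoose (m - 1)"
    by (rule gchoose_le[OF a1 a2])
  moreover have "(z - 1) gchoose (m - 1) < z gchoose m" by (rule gchoose_step[OF m1 assms(3)])
  moreover have "z - real s = z - 1 - real s'" "m - s = m - 1 - s'" using s by simp_all
  ultimately show ?thesis by (simp only:)
qed

definition bp :: "nat \<Rightarrow> real poly" where
  "bp k = smult (1 / fact k) (\<Prod>i=0..<k. [:- of_nat i, 1:])"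

lemma poly_bp: "poly (bp k) x = x gchoose k"
  unfolding bp_def gbinomial_prod_rev by (simp add: poly_prod divide_inverse mult.commute)

lemma descent_poly_eq:
  assumes "\<forall>n. n > Max (I \<union> {0}) \<longrightarrow> poly p (real n) = real (descent_count I n)"
  shows "descent_poly I = p"
  unfolding descent_poly_def
proof (rule the_equality)
  show "\<forall>n. n > Max (I \<union> {0}) \<longrightarrow> poly p (real n) = real (descent_count I n)" by (rule assms)
next
  fix q assume q: "\<forall>n. n > Max (I \<union> {0}) \<longrightarrow> poly q (real n) = real (descent_count I n)"
  let ?M = "Max (I \<union> {0})"
  show "q = p"
  proof (rule ccontr)
    assume "q \<noteq> p"
    then have "q - p \<noteq> 0" by simp
    then have fin: "finite {x. poly (q - p) x = 0}" by (rule poly_roots_finite)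
    have "real ` {Suc ?M..} \<subseteq> {x. poly (q - p) x = 0}" using q assms by auto
    then have "finite (real ` {Suc ?M..})" using fin finite_subset by blast
    then have "finite {Suc ?M..}" using finite_imageD[of real "{Suc ?M..}"] inj_on_of_nat by blast
    then show False using infinite_Ici by blast
  qed
qed

lemma finP:
  "finite {\<sigma>. distinct \<sigma> \<and> set \<sigma> = {1..m} \<and> dl \<sigma> = J}" (is "finite ?P")
proof (rule finite_subset)
  show "?P \<subseteq> {xs. set xs \<subseteq> {1..m} \<and> length xs = m}"
  proof
    fix xs assume "xs \<in> ?P"
    then show "xs \<in> {xs. set xs \<subseteq> {1..m} \<and> length xs = m}"
      using distinct_card[of xs] by simp
  qed
  show "finite {xs. set xs \<subseteq> {1..m} \<and> length xs = m}"
    by (rule finite_lists_length_eq) simp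
qed

lemma empty_count:
  assumes "n > 0"
  shows "descent_count {} n = 1"
proof -
  have "{xs. distinct xs \<and> set xs = {1..n} \<and> dl xs = {}} = {[1..<Suc n]}"
  proof
    show "{xs. distinct xs \<and> set xs = {1..n} \<and> dl xs = {}} \<subseteq> {[1..<Suc n]}"
    proof
      fix xs assume xs: "xs \<in> {xs. distinct xs \<and> set xs = {1..n} \<and> dl xs = {}}"
      then have "sorted xs" using dl_empty_sorted by blast
      then have "xs = [1..<Suc n]"
        using sorted_distinct_set_unique[of xs "[1..<Suc n]"] xs
        by (simp del: upt_Suc add: atLeastLessThanSuc_atLeastAtMost)
      then show "xs \<in> {[1..<Suc n]}" by simp
    qed
    show "{[1..<Suc n]} \<subseteq> {xs. distinct xs \<and> set xs = {1..n} \<and> dl xs = {}}"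
      using dl_sorted[of "[1..<Suc n]"] by (simp del: upt_Suc add: atLeastLessThanSuc_atLeastAtMost)
  qed
  then show ?thesis unfolding descent_count_list by simp
qed

theorem proposition4p19:
  fixes I :: "nat set" and z0 :: real
  assumes "finite I" and "0 \<notin> I"
    and "poly (descent_poly I) z0 = 0"
  shows "z0 \<le> 2 * real (Max (I \<union> {0})) - 1"
proof (cases "I = {}")
  case True
  have "descent_poly I = [:1:]"
    by (rule descent_poly_eq) (simp add: True empty_count)
  then show ?thesis using assms(3) by simp
next
  case False
  define m where "m = Max I"
  have mI: "m \<in> I" using False assms(1) m_def by simp
  have Isub: "I \<subseteq> {1..m}"
  proof
    fix i assume "i \<in> I"
    then have "i \<le> m" using assms(1) m_def by simp
    moreover have "i \<noteq> 0" using \<open>i \<in> I\<close> assms(2) by (metis)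
    ultimately
    show "i \<in> {1..m}" by simp
  qed
  have m1: "m \<ge> 1" using Isub mI by auto
  have Mm: "Max (I \<union> {0}) = m"
    using assms(1) False m_def by (simp add: Max_insert[symmetric] max_def)
  define J where "J = I - {m}"
  let ?P = "{\<sigma>. distinct \<sigma> \<and> set \<sigma> = {1..m} \<and> dl \<sigma> = J}"
  define p where "p = (\<Sum>\<sigma>\<in>?P. bp m - pcompose (bp (m - last \<sigma>)) [:- of_nat (last \<sigma>), 1:])"
  have lastP: "last \<sigma> \<in> {1..m}" if "\<sigma> \<in> ?P" for \<sigma>
  proof -
    have "length \<sigma> = m" using that distinct_card[of \<sigma>] by simp
    then have "\<sigma> \<noteq> []" using m1 by auto
    then show ?thesis using that last_in_set by blast
  qed
  have polyp: "poly p z = (\<Sum>\<sigma>\<in>?P. (z gchoose m) - ((z - real (last \<sigma>)) gchoose (m - last \<sigma>)))" for z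
    unfolding p_def by (simp add: poly_sum poly_pcompose poly_bp)
  have "descent_poly I = p"
  proof (rule descent_poly_eq, intro allI impI)
    fix n assume "Max (I \<union> {0}) < n"
    then have mn: "m < n" using Mm by simp
    have "real (descent_count I n) = real (\<Sum>\<sigma>\<in>?P. card {A. A \<subseteq> {1..n} \<and> card A = m \<and> \<not> {1..last \<sigma>} \<subseteq> A})"
    proof -
      note c1 = descent_count_list[of I n]
      note c2 = split_count[OF m1 mI Isub mn]
      note c3 = std_count[OF m1 mn, of "I - {m}"]
      show ?thesis unfolding J_def c1 c2 c3 ..
    qed
    also have "\<dots> = (\<Sum>\<sigma>\<in>?P. real (n choose m) - real ((n - last \<sigma>) choose (m - last \<sigma>)))"
      unfolding of_nat_sum
    proof (rule sum.cong)
      fix \<sigma> assume "\<sigma> \<in> ?P"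
      then have l: "last \<sigma> \<in> {1..m}" by (rule lastP)
      show "real (card {A. A \<subseteq> {1..n} \<and> card A = m \<and> \<not> {1..last \<sigma>} \<subseteq> A})
        = real (n choose m) - real ((n - last \<sigma>) choose (m - last \<sigma>))"
        by (rule card_S) (use l mn in auto)
    qed simp
    also have "\<dots> = poly p (real n)"
      unfolding polyp
    proof (rule sum.cong)
      fix \<sigma> assume "\<sigma> \<in> ?P"
      then have "last \<sigma> \<le> n" using lastP[OF \<open>\<sigma> \<in> ?P\<close>] mn by simp
      then have e: "real n - real (last \<sigma>) = real (n - last \<sigma>)" by (simp add: of_nat_diff)
      show "real (n choose m) - real ((n - last \<sigma>) choose (m - last \<sigma>))
          = (real n gchoose m) - ((real n - real (last \<sigma>)) gchoose (m - last \<sigma>))"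
        unfolding e binomial_gbinomial ..
    qed simp
    finally show "poly p (real n) = real (descent_count I n)" by simp
  qed
  show ?thesis
  proof (rule ccontr)
    assume "\<not> ?thesis"
    then have "z0 > 2 * real m - 1" using Mm by simp
    moreover have "real m \<ge> 1" using m1 by simp
    ultimately have z: "z0 > real m" by linarith
    obtain xs where xs: "distinct xs" "set xs = {1..m}" "dl xs = J \<inter> {1..<m}"
      using exists_desc by blast
    have "J \<inter> {1..<m} = J" using Isub J_def by auto
    then have "xs \<in> ?P" using xs by simp
    then have ne: "?P \<noteq> {}" by blast
    have "poly p z0 > 0" unfolding polyp
    proof (rule sum_pos[OF finP ne])
      fix \<sigma> assume "\<sigma> \<in> ?P"
      then have l: "last \<sigma> \<in> {1..m}" by (rule lastP)
      have "(z0 - real (last \<sigma>)) gchoose (m - last \<sigma>) < z0 gchoose m"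
        by (rule gchoose_lt) (use l z in auto)
      then show "0 < (z0 gchoose m) - ((z0 - real (last \<sigma>)) gchoose (m - last \<sigma>))" by simp
    qed
    then show False using assms(3) \<open>descent_poly I = p\<close> by simp
  qed
qed

end
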